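(* Let $T$ be a training dataset with $m$ features and $n$ records, where each feature takes at most $v$ possible values. Let $y_{\min}$ be the class label with the fewest records in $T$ and $n_{y_{\min}}$ the number of records with label $y_{\min}$. Then naive Bayes with Laplace smoothing is $\delta$-training stable on $T$ with $\delta=\left(\frac{n_{y_{\min}}+v}{n_{y_{\min}}}\right)^{m-1}\frac{n}{n-1}$.
   Context: Records are pairs $(\mathbf{x},y)$ with $\mathbf{x}=(x_1,\dots,x_m)\in X^m$ and $y\in Y$ finite; a training dataset is a finite multiset of records. For a dataset $S$ of size $N_S$, let $n^S_y$ be the number of records with label $y$ and $n^S_{x_i,y}$ the number with $i$-th feature $x_i$ and label $y$. Naive Bayes with Laplace smoothing trained on $S$ gives $p_{\mathcal{A}(S)}(y\mid\mathbf{x})=\hat p_S(y)\prod_{i=1}^m\hat p_S(x_i\mid y)$ with $\hat p_S(y)=n^S_y/N_S$ and smoothed conditionals $\hat p_S(x_i\mid y)=(n^S_{x_i,y}+1)/(n^S_y+v)$. $\mathcal{A}$ is $\delta$-training stable on $T$ (for a constant $\delta>1$) if for every $t=(\mathbf{x}^{(t)},y^{(t)})\in T$ with $p_{\mathcal{A}(T\setminus\{t\})}(y^{(t)}\mid\mathbf{x}^{(t)})>0$ and $p_{\mathcal{A}(T)}(y^{(t)}\mid\mathbf{x}^{(t)})>0$, setting $\gamma_t=\max\Big(\delta,\ \frac{p_{\mathcal{A}(T)}(y^{(t)}\mid\mathbf{x}^{(t)})}{p_{\mathcal{A}(T\setminus\{t\})}(y^{(t)}\mid\mathbf{x}^{(t)})},\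 \frac{p_{\mathcal{A}(T\setminus\{t\})}(y^{(t)}\mid\mathbf{x}^{(t)})}{p_{\mathcal{A}(T)}(y^{(t)}\mid\mathbf{x}^{(t)})}\Big)$, one has $\gamma_t^{-1}p_{\mathcal{A}(T\setminus\{t\})}(y\mid\mathbf{x})\le p_{\mathcal{A}(T)}(y\mid\mathbf{x})\le\gamma_t\,p_{\mathcal{A}(T\setminus\{t\})}(y\mid\mathbf{x})$ for all $\mathbf{x}\in X^m$, $y\in Y$. *)

theory Defs
  imports Complex_Main "HOL-Library.Multiset"
begin

text \<open>A record is a pair (x, y) with x a feature vector, represented as a list of
  length m, and y a class label. A training dataset is a finite multiset of records.\<close>

type_synonym ('x, 'y) rec = "'x list \<times> 'y"
type_synonym ('x, 'y) dataset = "('x, 'y) rec multiset"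

definition n_label :: "('x, 'y) dataset \<Rightarrow> 'y \<Rightarrow> nat" where
  "n_label S y = size (filter_mset (\<lambda>r. snd r = y) S)"

definition n_feat_label :: "('x, 'y) dataset \<Rightarrow> nat \<Rightarrow> 'x \<Rightarrow> 'y \<Rightarrow> nat" where
  "n_feat_label S i a y = size (filter_mset (\<lambda>r. fst r ! i = a \<and> snd r = y) S)"

definition nb_laplace :: "nat \<Rightarrow> nat \<Rightarrow> ('x, 'y) dataset \<Rightarrow> 'x list \<Rightarrow> 'y \<Rightarrow> real" where
  "nb_laplace v m S x y =
     (real (n_label S y) / real (size S)) *
     (\<Prod>i<m. (real (n_feat_label S i (x ! i) y) + 1) / (real (n_label S y) + real v))"

definition record_space :: "nat \<Rightarrow> (nat \<Rightarrow> 'x set) \<Rightarrow> 'x list set" where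
  "record_space m D = {x. length x = m \<and> (\<forall>i<m. x ! i \<in> D i)}"

text \<open>delta-training stability of a learner p (p S x y = probability of y given x for the
  model trained on S) on T, where x ranges over Xs and y over Ys; delta > 1 is required.\<close>
definition delta_training_stable ::
  "(('x, 'y) dataset \<Rightarrow> 'x list \<Rightarrow> 'y \<Rightarrow> real) \<Rightarrow> real \<Rightarrow> ('x, 'y) dataset
     \<Rightarrow> 'x list set \<Rightarrow> 'y set \<Rightarrow> bool" where
  "delta_training_stable p \<delta> T Xs Ys \<longleftrightarrow> 1 < \<delta> \<and>
     (\<forall>t \<in># T.
        p (T - {#t#}) (fst t) (snd t) > 0 \<and> p T (fst t) (snd t) > 0 \<longrightarrow>
        (let \<gamma> = max \<delta> (max (p T (fst t) (snd t) / p (T - {#t#}) (fst t) (snd t))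
                              (p (T - {#t#}) (fst t) (snd t) / p T (fst t) (snd t)))
         in \<forall>x\<in>Xs. \<forall>y\<in>Ys.
              inverse \<gamma> * p (T - {#t#}) x y \<le> p T x y \<and>
              p T x y \<le> \<gamma> * p (T - {#t#}) x y))"

end

theory Submission
  imports Defs
begin

lemma nl_add: "n_label (add_mset (xt,yt) T') y = n_label T' y + (if yt = y then 1 else 0)"
  by (simp add: n_label_def)

lemma nf_add: "n_feat_label (add_mset (xt,yt) T') i a y
   = n_feat_label T' i a y + (if xt!i = a \<and> yt = y then 1 else 0)"
  by (simp add: n_feat_label_def)

lemma nb_nonneg: "0 \<le> nb_laplace v m S x y"
  unfolding nb_laplace_def by (intro mult_nonneg_nonneg prod_nonneg divide_nonneg_nonneg) auto

lemma upper_prod: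
  fixes c g e :: "nat \<Rightarrow> real" and s s' :: real
  assumes "\<And>i. e i = 0 \<or> (e i = 1 \<and> c i = g i)" "\<And>i. 0 \<le> c i" "\<And>i. 0 \<le> g i" "0 < s" "0 < s'"
  shows "(\<Prod>i<m. (c i + e i + 1) / s) * (\<Prod>i<m. (g i + 1) / s')
       \<le> (\<Prod>i<m. (g i + 1 + 1) / s) * (\<Prod>i<m. (c i + 1) / s')"
proof -
  have "(\<Prod>i<m. (c i + e i + 1) / s * ((g i + 1) / s'))
       \<le> (\<Prod>i<m. (g i + 1 + 1) / s * ((c i + 1) / s'))"
  proof (rule prod_mono, rule conjI)
    fix i
    show "0 \<le> (c i + e i + 1) / s * ((g i + 1) / s')"
      using assms(1)[of i] assms(2-5) by (auto intro!: mult_nonneg_nonneg divide_nonneg_nonneg)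
    have "(c i + e i + 1) * (g i + 1) \<le> (g i + 1 + 1) * (c i + 1)"
      using assms(1)[of i] assms(2-5) by (auto simp: algebra_simps)
    then have "(c i + e i + 1) * (g i + 1) / (s * s') \<le> (g i + 1 + 1) * (c i + 1) / (s*s')"
      using assms by (intro divide_right_mono) auto
    then show "(c i + e i + 1) / s * ((g i + 1) / s') \<le> (g i + 1 + 1) / s * ((c i + 1) / s')"
      by (simp add: field_simps)
  qed
  then show ?thesis by (simp only: prod.distrib)
qed

lemma lower_prod:
  fixes c e :: "nat \<Rightarrow> real" and s s' :: real
  assumes "\<And>i. e i = 0 \<or> e i = 1" "\<And>i. 0 \<le> c i" "0 < s" "0 < s'"
  shows "(\<Prod>i<m. (c i + 1) / s') \<le> (\<Prod>i<m. (c i + e i + 1) / s) * (s/s')^m"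
proof -
  have "(\<Prod>i<m. (c i + 1) / s') \<le> (\<Prod>i<m. (c i + e i + 1) / s * (s/s'))"
  proof (rule prod_mono, rule conjI)
    fix i
    show "0 \<le> (c i + 1) / s'" using assms by auto
    have "(c i + 1) \<le> (c i + e i + 1)" using assms(1)[of i] by auto
    then show "(c i + 1) / s' \<le> (c i + e i + 1) / s * (s/s')"
      using assms by (simp add: divide_right_mono)
  qed
  then show ?thesis by (simp only: prod.distrib prod_constant card_lessThan)
qed


theorem mainTheorem4:
  fixes T :: "('x, 'y) dataset" and m v :: nat and D :: "nat \<Rightarrow> 'x set" and Y :: "'y set"
  assumes "finite Y"
    and "1 \<le> m"
    and "2 \<le> size T"
    and "\<forall>i<m. finite (D i) \<and> card (D i) \<le> v"
    and "\<forall>r\<in>#T. fst r \<in> record_space m D \<and> snd r \<in> Y"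
  shows "delta_training_stable (nb_laplace v m)
           ((real (Min (n_label T ` snd ` set_mset T) + v)
               / real (Min (n_label T ` snd ` set_mset T))) ^ (m - 1)
             * (real (size T) / (real (size T) - 1)))
           T (record_space m D) Y"
proof -
  define nmin where "nmin = Min (n_label T ` snd ` set_mset T)"
  define q where "q = real (nmin + v) / real nmin"
  define \<delta> where "\<delta> = q ^ (m - 1) * (real (size T) / (real (size T) - 1))"
  define p :: "('x, 'y) dataset \<Rightarrow> 'x list \<Rightarrow> 'y \<Rightarrow> real" where "p = nb_laplace v m"
  have Tne: "T \<noteq> {#}" using assms(3) by auto
  then obtain t0 where t0: "t0 \<in># T" by blast
  have v1: "1 \<le> v"
  proof -
    have "fst t0 \<in> record_space m D" using assms(5) t0 by blast
    then have "fst t0 ! 0 \<in> D 0" using assms(2) unfolding record_space_def by simp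
    moreover have "finite (D 0)" "card (D 0) \<le> v" using assms(4) assms(2) by auto
    ultimately have "0 < card (D 0)" by (metis card_gt_0_iff empty_iff)
    then show ?thesis using \<open>card (D 0) \<le> v\<close> by linarith
  qed
  have fin: "finite (n_label T ` snd ` set_mset T)" by simp
  have nl_pos: "1 \<le> n_label T (snd r)" if "r \<in># T" for r
  proof -
    have "1 \<le> count (filter_mset (\<lambda>r'. snd r' = snd r) T) r" using that by simp
    then show ?thesis unfolding n_label_def by (rule order_trans[OF _ count_le_size])
  qed
  have nmin_le: "nmin \<le> n_label T (snd r)" if "r \<in># T" for r
    unfolding nmin_def using fin that by (intro Min_le) auto
  have nmin1: "1 \<le> nmin"
  proof -
    have "nmin \<in> n_label T ` snd ` set_mset T" unfolding nmin_def using fin Tne by (intro Min_in) auto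
    then show ?thesis using nl_pos by auto
  qed
  have q1: "1 \<le> q" unfolding q_def using nmin1 by simp
  have Nge: "real (size T) / (real (size T) - 1) > 1" using assms(3) by (simp add: field_simps)
  have qpow: "1 \<le> q ^ (m - 1)" using q1 by (rule one_le_power)
  have \<delta>ge: "real (size T) / (real (size T) - 1) \<le> \<delta>"
    unfolding \<delta>_def using mult_right_mono[OF qpow, of "real (size T) / (real (size T) - 1)"] Nge
    by (simp only: mult_1)
  have \<delta>1: "1 < \<delta>" using \<delta>ge Nge by linarith
  have main: "p (T - {#t#}) x y \<le> \<delta> * p T x y \<and>
       (p T x y \<le> (p T (fst t) (snd t) / p (T - {#t#}) (fst t) (snd t)) * p (T - {#t#}) x y
         \<or> p T x y \<le> p (T - {#t#}) x y)"
    if tT: "t \<in># T" and pos: "p (T - {#t#}) (fst t) (snd t) > 0" and xX: "x \<in> record_space m D"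
    for t x y
  proof -
    obtain xt yt where teq: "t = (xt, yt)" by force
    define T' where "T' = T - {#t#}"
    have Teq: "T = add_mset (xt,yt) T'" unfolding T'_def teq[symmetric] using tT by simp
    define N' where "N' = size T'"
    have sizeT: "size T = Suc N'" unfolding N'_def Teq by simp
    have N'1: "1 \<le> N'" using assms(3) sizeT by simp
    have Npos: "0 < real N'" "0 < real N' + 1" using N'1 by auto
    have Nne: "real N' \<noteq> 0" "real N' + 1 \<noteq> 0" using Npos by auto
    have \<delta>ge': "(real N' + 1) / real N' \<le> \<delta>" using \<delta>ge sizeT by (simp add: add.commute)
    show ?thesis
    proof (cases "y = yt")
      case False
      define n where "n = n_label T' y"
      define P where "P = (\<Prod>i<m. (real (n_feat_label T' i (x ! i) y) + 1) / (real n + real v))"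
      have P0: "0 \<le> P" unfolding P_def by (intro prod_nonneg divide_nonneg_nonneg) auto
      have hp: "p T x y = real n / (real N' + 1) * P"
        unfolding p_def nb_laplace_def P_def n_def using False
        by (simp add: Teq nl_add nf_add N'_def)
      have hp': "p (T - {#t#}) x y = real n / real N' * P"
        unfolding p_def nb_laplace_def P_def n_def T'_def[symmetric] N'_def by simp
      have "real n / real N' = (real N' + 1) / real N' * (real n / (real N' + 1))"
        using Nne by simp
      also have "\<dots> \<le> \<delta> * (real n / (real N' + 1))"
        using \<delta>ge' by (intro mult_right_mono) auto
      finally have l: "p (T - {#t#}) x y \<le> \<delta> * p T x y"
        unfolding hp hp' using P0 by (metis mult.assoc mult_right_mono)
      have "real n / (real N' + 1) \<le> real n / real N'" using N'1
        by (intro divide_left_mono) auto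
      then have "p T x y \<le> p (T - {#t#}) x y" unfolding hp hp' using P0 by (rule mult_right_mono)
      with l show ?thesis by blast
    next
      case True
      then have yeq: "y = yt" .
      define a' where "a' = n_label T' yt"
      define c where "c i = real (n_feat_label T' i (x!i) yt)" for i
      define g where "g i = real (n_feat_label T' i (xt!i) yt)" for i
      define e where "e i = real (if xt!i = x!i then 1 else 0)" for i
      define s where "s = real a' + 1 + real v"
      define s' where "s' = real a' + real v"
      have s0: "0 < s" "0 < s'" unfolding s_def s'_def using v1 by auto
      have hpx: "p T x yt = (real a' + 1)/(real N' + 1) * (\<Prod>i<m. (c i + e i + 1)/s)"
        unfolding p_def nb_laplace_def
        by (simp add: Teq nl_add nf_add N'_def a'_def c_def e_def s_def add.commute add.left_commute)
      have hpt: "p T xt yt = (real a' + 1)/(real N' + 1) * (\<Prod>i<m. (g i + 1 + 1)/s)"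
        unfolding p_def nb_laplace_def
        by (simp add: Teq nl_add nf_add N'_def a'_def g_def s_def add.commute add.left_commute)
      have hp'x: "p (T - {#t#}) x yt = real a' / real N' * (\<Prod>i<m. (c i + 1)/s')"
        unfolding p_def nb_laplace_def T'_def[symmetric] N'_def a'_def c_def s'_def by simp
      have hp't: "p (T - {#t#}) xt yt = real a' / real N' * (\<Prod>i<m. (g i + 1)/s')"
        unfolding p_def nb_laplace_def T'_def[symmetric] N'_def a'_def g_def s'_def by simp
      have e01: "e i = 0 \<or> (e i = 1 \<and> c i = g i)" for i unfolding e_def c_def g_def by auto
      have c0: "0 \<le> c i" "0 \<le> g i" for i unfolding c_def g_def by auto
      have up: "(\<Prod>i<m. (c i + e i + 1) / s) * (\<Prod>i<m. (g i + 1) / s')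
       \<le> (\<Prod>i<m. (g i + 1 + 1) / s) * (\<Prod>i<m. (c i + 1) / s')"
        using e01 c0 s0 by (rule upper_prod)
      have lo: "(\<Prod>i<m. (c i + 1) / s') \<le> (\<Prod>i<m. (c i + e i + 1) / s) * (s/s')^m"
        using e01 c0 s0 by (intro lower_prod) auto
      have ptpos: "0 < p (T - {#t#}) xt yt" using pos teq by simp
      have cross: "p T x yt * p (T - {#t#}) xt yt \<le> p T xt yt * p (T - {#t#}) x yt"
      proof -
        have "p T x yt * p (T - {#t#}) xt yt = ((real a' + 1)/(real N' + 1) * (real a' / real N'))
             * ((\<Prod>i<m. (c i + e i + 1)/s) * (\<Prod>i<m. (g i + 1)/s'))"
          unfolding hpx hp't by (simp add: ac_simps)
        also have "\<dots> \<le> ((real a' + 1)/(real N' + 1) * (real a' / real N'))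
             * ((\<Prod>i<m. (g i + 1 + 1) / s) * (\<Prod>i<m. (c i + 1) / s'))"
          using up by (intro mult_left_mono) auto
        also have "\<dots> = p T xt yt * p (T - {#t#}) x yt"
          unfolding hpt hp'x by (simp add: ac_simps)
        finally show ?thesis .
      qed
      have upper: "p T x yt \<le> (p T xt yt / p (T - {#t#}) xt yt) * p (T - {#t#}) x yt"
        using cross ptpos by (simp add: field_simps)
      have nle: "real nmin \<le> real a' + 1"
        using nmin_le[OF tT] by (simp add: teq Teq nl_add a'_def)
      have ss'q: "s / s' \<le> q"
      proof -
        have "real nmin * s \<le> (real nmin + real v) * s'"
        proof -
          have "real nmin \<le> real v * (real a' + real v)"
          proof -
            have "real a' + real v \<le> real v * (real a' + real v)"
              using v1 by (intro mult_le_cancel_right1[THEN iffD2] ) auto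
            then show ?thesis using nle v1 by linarith
          qed
          then show ?thesis unfolding s_def s'_def by (simp add: algebra_simps)
        qed
        then show ?thesis unfolding q_def using s0 nmin1 by (simp add: field_simps)
      qed
      have ss'0: "0 \<le> s / s'" using s0 by simp
      have powle: "(s/s')^m \<le> q^(m-1) * (s/s')"
      proof -
        have "(s/s')^m = (s/s')^(m-1) * (s/s')" using assms(2)
          by (metis One_nat_def Suc_diff_le diff_Suc_1 power_Suc2)
        also have "\<dots> \<le> q^(m-1) * (s/s')"
          using ss'q ss'0 by (intro mult_right_mono power_mono) auto
        finally show ?thesis .
      qed
      have aineq: "real a' * (s/s') \<le> real a' + 1"
      proof -
        have "real a' * s \<le> (real a' + 1) * s'" unfolding s_def s'_def by (simp add: algebra_simps)
        then show ?thesis using s0 by (simp add: field_simps)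
      qed
      define Q where "Q = (\<Prod>i<m. (c i + e i + 1) / s)"
      have Q0: "0 \<le> Q" unfolding Q_def using c0 e01 s0
      proof (intro prod_nonneg divide_nonneg_nonneg)
        fix i show "0 \<le> c i + e i + 1" using c0(1)[of i] e01[of i] by auto
      qed (use s0 in auto)
      have "p (T - {#t#}) x yt \<le> real a' / real N' * (Q * (s/s')^m)"
        unfolding hp'x Q_def using lo by (intro mult_left_mono) auto
      also have "\<dots> \<le> real a' / real N' * (Q * (q^(m-1) * (s/s')))"
        using powle Q0 by (intro mult_left_mono) auto
      also have "\<dots> = q^(m-1) * (real a' * (s/s')) / real N' * Q" by (simp add: field_simps)
      also have "\<dots> \<le> q^(m-1) * (real a' + 1) / real N' * Q"
        using aineq qpow Q0 N'1 by (intro mult_right_mono divide_right_mono mult_left_mono) auto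
      also have "\<dots> = (q^(m-1) * ((real N' + 1) / real N')) * ((real a' + 1)/(real N' + 1) * Q)"
      proof -
        have k: "(real N' + 1) / real N' * ((real a' + 1) / (real N' + 1)) = (real a' + 1) / real N'"
          using Nne by simp
        have "(q^(m-1) * ((real N' + 1) / real N')) * ((real a' + 1)/(real N' + 1) * Q)
           = q^(m-1) * ((real N' + 1) / real N' * ((real a' + 1) / (real N' + 1))) * Q"
          by (simp only: ac_simps)
        also have "\<dots> = q^(m-1) * (real a' + 1) / real N' * Q" unfolding k by simp
        finally show ?thesis by simp
      qed
      also have "\<dots> = \<delta> * p T x yt"
      proof -
        have Nq: "real (size T) / (real (size T) - 1) = (real N' + 1) / real N'" using sizeT by simp
        show ?thesis by (simp only: hpx Q_def \<delta>_def Nq)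
      qed
      finally show ?thesis using upper yeq teq by simp
    qed
  qed
  show ?thesis
    unfolding delta_training_stable_def Let_def nmin_def[symmetric] q_def[symmetric] \<delta>_def[symmetric]
      p_def[symmetric]
  proof (intro conjI \<delta>1 ballI impI allI)
    fix t x y assume tT: "t \<in># T"
      and pos: "0 < p (T - {#t#}) (fst t) (snd t) \<and> 0 < p T (fst t) (snd t)"
      and xX: "x \<in> record_space m D" and yY: "y \<in> Y"
    define \<gamma> where "\<gamma> = max \<delta> (max (p T (fst t) (snd t) / p (T - {#t#}) (fst t) (snd t))
                              (p (T - {#t#}) (fst t) (snd t) / p T (fst t) (snd t)))"
    have g\<delta>: "\<delta> \<le> \<gamma>" and g\<rho>: "p T (fst t) (snd t) / p (T - {#t#}) (fst t) (snd t) \<le> \<gamma>"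
      unfolding \<gamma>_def by auto
    have g1: "1 \<le> \<gamma>" using g\<delta> \<delta>1 by linarith
    have p0: "0 \<le> p T x y" "0 \<le> p (T - {#t#}) x y" unfolding p_def by (auto intro: nb_nonneg)
    note M = main[OF tT _ xX, of y]
    have M1: "p (T - {#t#}) x y \<le> \<delta> * p T x y" using M pos by blast
    have M2: "p T x y \<le> (p T (fst t) (snd t) / p (T - {#t#}) (fst t) (snd t)) * p (T - {#t#}) x y
         \<or> p T x y \<le> p (T - {#t#}) x y" using M pos by blast
    have "\<delta> * p T x y \<le> \<gamma> * p T x y" by (rule mult_right_mono[OF g\<delta> p0(1)])
    with M1 have C: "p (T - {#t#}) x y \<le> \<gamma> * p T x y" by (rule order_trans)
    have gpos: "0 < \<gamma>" using g1 by linarith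
    have "inverse \<gamma> * p (T - {#t#}) x y \<le> inverse \<gamma> * (\<gamma> * p T x y)"
      using C gpos by (intro mult_left_mono) auto
    also have "\<dots> = p T x y" using gpos by simp
    finally have A: "inverse \<gamma> * p (T - {#t#}) x y \<le> p T x y" .
    have B: "p T x y \<le> \<gamma> * p (T - {#t#}) x y"
      using M2
    proof
      assume h: "p T x y \<le> (p T (fst t) (snd t) / p (T - {#t#}) (fst t) (snd t)) * p (T - {#t#}) x y"
      have "(p T (fst t) (snd t) / p (T - {#t#}) (fst t) (snd t)) * p (T - {#t#}) x y
           \<le> \<gamma> * p (T - {#t#}) x y" by (rule mult_right_mono[OF g\<rho> p0(2)])
      with h show ?thesis by (rule order_trans)
    next
      assume h: "p T x y \<le> p (T - {#t#}) x y"
      have "1 * p (T - {#t#}) x y \<le> \<gamma> * p (T - {#t#}) x y" by (rule mult_right_mono[OF g1 p0(2)])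
      with h show ?thesis by simp
    qed
    show "inverse (max \<delta> (max (p T (fst t) (snd t) / p (T - {#t#}) (fst t) (snd t)) (p (T - {#t#}) (fst t) (snd t) / p T (fst t) (snd t)))) * p (T - {#t#}) x y \<le> p T x y"
      using A unfolding \<gamma>_def .
    show "p T x y \<le> (max \<delta> (max (p T (fst t) (snd t) / p (T - {#t#}) (fst t) (snd t)) (p (T - {#t#}) (fst t) (snd t) / p T (fst t) (snd t)))) * p (T - {#t#}) x y"
      using B unfolding \<gamma>_def .
  qed
qed

end
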